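(* In any execution of Algorithm $\mathsf{AG}$ (described in the context) with a guild, some process in the maximal guild sends a $\mathrm{DistributeT}$ message.
   Context: System model: a finite set $\mathcal{P}=\{p_1,\dots,p_n\}$ of processes communicating asynchronously over authenticated point-to-point links; every message sent from a correct process to a correct process is eventually delivered. A process that follows its protocol is correct; others (faulty, Byzantine) may behave arbitrarily. $F\subseteq\mathcal{P}$ denotes the (unknown) set of faulty processes of an execution. For $\mathcal{A}\subseteq 2^{\mathcal{P}}$, write $\mathcal{A}^*=\{A' : A'\subseteq A,\ A\in\mathcal{A}\}$. An asymmetric fail-prone system is an array $\mathbb{F}=[\mathcal{F}_1,\dots,\mathcal{F}_n]$ with $\mathcal{F}_i\subseteq 2^{\mathcal{P}}$. An asymmetric Byzantine quorum system for $\mathbb{F}$ is an array $\mathbb{Q}=[\mathcal{Q}_1,\dots,\mathcal{Q}_n]$ with $\mathcal{Q}_i\subseteq 2^{\mathcal{P}}$ (quorums for $p_i$) satisfying: (consistency) for all $i,j$, all $Q_i\in\mathcal{Q}_i$, $Q_j\in\mathcal{Q}_j$, $F_{ij}\in\mathcal{F}_i^*\cap\mathcal{F}_j^*$: $Q_i\cap Q_j\not\subseteq F_{ij}$; (availability) for all $i$ and $F_i\in\mathcal{F}_i$ there is $Q_i\in\mathcal{Q}_i$ with $F_i\cap Q_i=\emptyset$. A kernel for $p_i$ is a set $K\subseteq\mathcal{P}$ intersecting every $Q\in\mathcal{Q}_i$; $\mathcal{K}_i$ is the set of kernels for $p_i$. A correct process $p_i$ is wise if $F\in\mathcal{F}_i^*$.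 A guild is a set $\mathcal{G}$ of wise processes such that every $p_i\in\mathcal{G}$ has some $Q_i\in\mathcal{Q}_i$ with $Q_i\subseteq\mathcal{G}$. An execution with a guild is one in which a nonempty guild exists; the maximal guild $\mathcal{G}_{max}$ is the union of all guilds. Asymmetric reliable broadcast (arb-broadcast / arb-deliver) guarantees, in every execution with a guild: if a correct process arb-broadcasts $m$, every process of $\mathcal{G}_{max}$ eventually arb-delivers $m$; for each sender, all processes of $\mathcal{G}_{max}$ that arb-deliver from it deliver the same message; if some process of $\mathcal{G}_{max}$ arb-delivers a message from a sender, all processes of $\mathcal{G}_{max}$ eventually arb-deliver a message from that sender; a correct process arb-delivers at most one message per sender, and from a correct sender only a message it arb-broadcast. Algorithm $\mathsf{AG}$ (code of $p_i$; each correct process invokes ag-propose$(x_i)$ exactly once; each guarded "upon there being ..." action executes at most once, message handlers once per message). State: sets $S_i,T_i,U_i$ initially empty, boolean $sentT$ initially false. (1) Upon ag-propose$(x_i)$: arb-broadcast $(p_i,x_i)$. (2) Upon arb-delivering $(p_j,x_j)$ from $p_j$: $S_i\gets S_i\cup\{(p_j,x_j)\}$. (3) Upon there being $Q\in\mathcal{Q}_i$ such that for every $p_j\in Q$ some pair $(p_j,\cdot)\in S_i$: send $\langle\mathrm{DistributeS},p_i,S_i\rangle$ to all. (4) For a received $\langle\mathrm{DistributeS},p_j,S_j\rangle$: once $S_j\subseteq S_i$, provided $sentT$ is false at that moment, set $T_i\gets T_i\cup S_j$ and send $\langle\mathrm{Ack},p_i\rangle$ to $p_j$. (5) Upon Ack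 received from every member of some $Q\in\mathcal{Q}_i$: send Ready to all. (6) Upon Ready received from every member of some $Q\in\mathcal{Q}_i$: send Confirm to all. (7) Upon Confirm received from every member of some $K\in\mathcal{K}_i$: send Confirm to all. (8) Upon Confirm received from every member of some $Q\in\mathcal{Q}_i$: send $\langle\mathrm{DistributeT},p_i,T_i\rangle$ to all and set $sentT\gets$ true. (9) For a received $\langle\mathrm{DistributeT},p_j,T_j\rangle$ from $p_j$: once $T_j\subseteq S_i$, set $U_i\gets U_i\cup T_j$. (10) Upon DistributeT received from every member of some $Q\in\mathcal{Q}_i$: ag-deliver$(U_i)$. *)

theory Defs
  imports Main
begin

text \<open>Processes are the elements of a finite type 'p (so the process set is UNIV).
  A fail-prone system / quorum system is a function from processes to sets of sets of processes.\<close>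

definition downset :: "'a set set \<Rightarrow> 'a set set" where
  "downset A = {A'. \<exists>B\<in>A. A' \<subseteq> B}"

definition abqs :: "('p \<Rightarrow> 'p set set) \<Rightarrow> ('p \<Rightarrow> 'p set set) \<Rightarrow> bool" where
  "abqs Fs Qs \<longleftrightarrow>
     (\<forall>i j Qi Qj Fij. Qi \<in> Qs i \<longrightarrow> Qj \<in> Qs j \<longrightarrow> Fij \<in> downset (Fs i) \<inter> downset (Fs j)
         \<longrightarrow> \<not> (Qi \<inter> Qj \<subseteq> Fij)) \<and>
     (\<forall>i. \<forall>Fi\<in>Fs i. \<exists>Qi\<in>Qs i. Fi \<inter> Qi = {})"

definition is_kernel :: "('p \<Rightarrow> 'p set set) \<Rightarrow> 'p \<Rightarrow> 'p set \<Rightarrow> bool" where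
  "is_kernel Qs i K \<longleftrightarrow> (\<forall>Q\<in>Qs i. K \<inter> Q \<noteq> {})"

definition wise :: "('p \<Rightarrow> 'p set set) \<Rightarrow> 'p set \<Rightarrow> 'p \<Rightarrow> bool" where
  "wise Fs F i \<longleftrightarrow> i \<notin> F \<and> F \<in> downset (Fs i)"

definition guild :: "('p \<Rightarrow> 'p set set) \<Rightarrow> ('p \<Rightarrow> 'p set set) \<Rightarrow> 'p set \<Rightarrow> 'p set \<Rightarrow> bool" where
  "guild Fs Qs F G \<longleftrightarrow> (\<forall>i\<in>G. wise Fs F i) \<and> (\<forall>i\<in>G. \<exists>Q\<in>Qs i. Q \<subseteq> G)"

definition has_guild :: "('p \<Rightarrow> 'p set set) \<Rightarrow> ('p \<Rightarrow> 'p set set) \<Rightarrow> 'p set \<Rightarrow> bool" where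
  "has_guild Fs Qs F \<longleftrightarrow> (\<exists>G. G \<noteq> {} \<and> guild Fs Qs F G)"

definition Gmax :: "('p \<Rightarrow> 'p set set) \<Rightarrow> ('p \<Rightarrow> 'p set set) \<Rightarrow> 'p set \<Rightarrow> 'p set" where
  "Gmax Fs Qs F = \<Union>{G. guild Fs Qs F G}"

datatype ('p, 'v) msg =
    DistS 'p "('p \<times> 'v) set"
  | Ack 'p
  | Ready
  | Confirm
  | DistT 'p "('p \<times> 'v) set"

text \<open>Guarded actions that execute at most once: (3),(5),(6),(7),(8),(10).\<close>
datatype gact = A3 | A5 | A6 | A7 | A8 | A10

record ('p, 'v) lst =
  proposed :: bool                          \<comment> \<open>ag-propose handled (action 1)\<close>
  arbBc :: "('p \<times> 'v) option"            \<comment> \<open>message arb-broadcast by this process\<close>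
  arbDel :: "'p \<Rightarrow> ('p \<times> 'v) option"    \<comment> \<open>message arb-delivered from each sender\<close>
  Sset :: "('p \<times> 'v) set"
  Tset :: "('p \<times> 'v) set"
  Uset :: "('p \<times> 'v) set"
  sentT :: bool
  rcvd :: "('p \<times> ('p, 'v) msg) set"       \<comment> \<open>(sender, message) pairs received\<close>
  handled :: "('p \<times> ('p, 'v) msg) set"
  fired :: "gact set"
  agOut :: "('p \<times> 'v) set option"       \<comment> \<open>ag-deliver output\<close>

record ('p, 'v) cfg =
  loc :: "'p \<Rightarrow> ('p, 'v) lst"
  sent :: "('p \<times> 'p \<times> ('p, 'v) msg) set"  \<comment> \<open>(sender, receiver, message) ever sent\<close>

datatype ('p, 'v) lbl =
    Propose 'p
  | DoDistS 'p
  | HandleS 'p 'p 'p "('p \<times> 'v) set"      \<comment> \<open>(4): receiver, sender, p_j, S_j\<close>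
  | SendReady 'p
  | ConfirmQ 'p
  | ConfirmK 'p
  | DoDistT 'p
  | HandleT 'p 'p "('p \<times> 'v) set"         \<comment> \<open>(9): receiver, p_j, T_j\<close>
  | Deliver 'p
  | ArbDeliver 'p 'p "'p \<times> 'v"            \<comment> \<open>arb-deliver at receiver from sender, then (2)\<close>
  | Recv 'p 'p "('p, 'v) msg"              \<comment> \<open>receiver gets message from sender\<close>
  | Byz 'p 'p "('p, 'v) msg"               \<comment> \<open>faulty sender sends arbitrary message to receiver\<close>
  | Stutter

fun owner :: "('p, 'v) lbl \<Rightarrow> 'p option" where
  "owner (Propose i) = Some i"
| "owner (DoDistS i) = Some i"
| "owner (HandleS i k j X) = Some i"
| "owner (SendReady i) = Some i"
| "owner (ConfirmQ i) = Some i"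
| "owner (ConfirmK i) = Some i"
| "owner (DoDistT i) = Some i"
| "owner (HandleT i j X) = Some i"
| "owner (Deliver i) = Some i"
| "owner _ = None"

definition init_lst :: "('p, 'v) lst" where
  "init_lst = \<lparr>proposed = False, arbBc = None, arbDel = (\<lambda>_. None), Sset = {}, Tset = {}, Uset = {},
     sentT = False, rcvd = {}, handled = {}, fired = {}, agOut = None\<rparr>"

definition init_cfg :: "('p, 'v) cfg" where
  "init_cfg = \<lparr>loc = (\<lambda>_. init_lst), sent = {}\<rparr>"

definition setloc :: "('p, 'v) cfg \<Rightarrow> 'p \<Rightarrow> ('p, 'v) lst \<Rightarrow> ('p, 'v) cfg" where
  "setloc c i ls = c\<lparr>loc := (loc c)(i := ls)\<rparr>"

definition send_all :: "('p, 'v) cfg \<Rightarrow> 'p \<Rightarrow> ('p, 'v) msg \<Rightarrow> ('p, 'v) cfg" where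
  "send_all c i m = c\<lparr>sent := sent c \<union> {(i, k, m) | k. True}\<rparr>"

text \<open>Enabledness of a step (correct processes only execute protocol steps).\<close>
fun en :: "('p \<Rightarrow> 'p set set) \<Rightarrow> 'p set \<Rightarrow> ('p, 'v) cfg \<Rightarrow> ('p, 'v) lbl \<Rightarrow> bool" where
  "en Qs F c (Propose i) = (i \<notin> F \<and> \<not> proposed (loc c i))"
| "en Qs F c (DoDistS i) = (i \<notin> F \<and> A3 \<notin> fired (loc c i) \<and>
     (\<exists>Q\<in>Qs i. \<forall>j\<in>Q. \<exists>v. (j, v) \<in> Sset (loc c i)))"
| "en Qs F c (HandleS i k j X) = (i \<notin> F \<and> (k, DistS j X) \<in> rcvd (loc c i) \<and>
     (k, DistS j X) \<notin> handled (loc c i) \<and> X \<subseteq> Sset (loc c i))"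
| "en Qs F c (SendReady i) = (i \<notin> F \<and> A5 \<notin> fired (loc c i) \<and>
     (\<exists>Q\<in>Qs i. \<forall>j\<in>Q. \<exists>a. (j, Ack a) \<in> rcvd (loc c i)))"
| "en Qs F c (ConfirmQ i) = (i \<notin> F \<and> A6 \<notin> fired (loc c i) \<and>
     (\<exists>Q\<in>Qs i. \<forall>j\<in>Q. (j, Ready) \<in> rcvd (loc c i)))"
| "en Qs F c (ConfirmK i) = (i \<notin> F \<and> A7 \<notin> fired (loc c i) \<and>
     (\<exists>K. is_kernel Qs i K \<and> (\<forall>j\<in>K. (j, Confirm) \<in> rcvd (loc c i))))"
| "en Qs F c (DoDistT i) = (i \<notin> F \<and> A8 \<notin> fired (loc c i) \<and>
     (\<exists>Q\<in>Qs i. \<forall>j\<in>Q. (j, Confirm) \<in> rcvd (loc c i)))"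
| "en Qs F c (HandleT i j X) = (i \<notin> F \<and> (j, DistT j X) \<in> rcvd (loc c i) \<and>
     (j, DistT j X) \<notin> handled (loc c i) \<and> X \<subseteq> Sset (loc c i))"
| "en Qs F c (Deliver i) = (i \<notin> F \<and> A10 \<notin> fired (loc c i) \<and>
     (\<exists>Q\<in>Qs i. \<forall>j\<in>Q. \<exists>a X. (j, DistT a X) \<in> rcvd (loc c i)))"
| "en Qs F c (ArbDeliver i j m) = (i \<notin> F \<and> arbDel (loc c i) j = None)"
| "en Qs F c (Recv i j m) = (i \<notin> F \<and> (j, i, m) \<in> sent c)"
| "en Qs F c (Byz j i m) = (j \<in> F)"
| "en Qs F c Stutter = True"

text \<open>Effect of a step; x gives the proposals of the processes.\<close>
fun eff :: "('p \<Rightarrow> 'v) \<Rightarrow> ('p, 'v) cfg \<Rightarrow> ('p, 'v) lbl \<Rightarrow> ('p, 'v) cfg" where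
  "eff x c (Propose i) =
     setloc c i ((loc c i)\<lparr>proposed := True, arbBc := Some (i, x i)\<rparr>)"
| "eff x c (DoDistS i) =
     send_all (setloc c i ((loc c i)\<lparr>fired := insert A3 (fired (loc c i))\<rparr>)) i
       (DistS i (Sset (loc c i)))"
| "eff x c (HandleS i k j X) =
     (let ls = (loc c i)\<lparr>handled := insert (k, DistS j X) (handled (loc c i))\<rparr> in
      if sentT (loc c i) then setloc c i ls
      else (setloc c i (ls\<lparr>Tset := Tset (loc c i) \<union> X\<rparr>))\<lparr>sent := insert (i, j, Ack i) (sent c)\<rparr>)"
| "eff x c (SendReady i) =
     send_all (setloc c i ((loc c i)\<lparr>fired := insert A5 (fired (loc c i))\<rparr>)) i Ready"
| "eff x c (ConfirmQ i) =
     send_all (setloc c i ((loc c i)\<lparr>fired := insert A6 (fired (loc c i))\<rparr>)) i Confirm"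
| "eff x c (ConfirmK i) =
     send_all (setloc c i ((loc c i)\<lparr>fired := insert A7 (fired (loc c i))\<rparr>)) i Confirm"
| "eff x c (DoDistT i) =
     send_all (setloc c i ((loc c i)\<lparr>fired := insert A8 (fired (loc c i)), sentT := True\<rparr>)) i
       (DistT i (Tset (loc c i)))"
| "eff x c (HandleT i j X) =
     setloc c i ((loc c i)\<lparr>handled := insert (j, DistT j X) (handled (loc c i)),
                           Uset := Uset (loc c i) \<union> X\<rparr>)"
| "eff x c (Deliver i) =
     setloc c i ((loc c i)\<lparr>fired := insert A10 (fired (loc c i)), agOut := Some (Uset (loc c i))\<rparr>)"
| "eff x c (ArbDeliver i j m) =
     setloc c i ((loc c i)\<lparr>arbDel := (arbDel (loc c i))(j := Some m),
        Sset := (if fst m = j then insert m (Sset (loc c i)) else Sset (loc c i))\<rparr>)"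
| "eff x c (Recv i j m) = setloc c i ((loc c i)\<lparr>rcvd := insert (j, m) (rcvd (loc c i))\<rparr>)"
| "eff x c (Byz j i m) = c\<lparr>sent := insert (j, i, m) (sent c)\<rparr>"
| "eff x c Stutter = c"

definition execution :: "('p \<Rightarrow> 'p set set) \<Rightarrow> 'p set \<Rightarrow> ('p \<Rightarrow> 'v) \<Rightarrow> (nat \<Rightarrow> ('p, 'v) cfg)
    \<Rightarrow> (nat \<Rightarrow> ('p, 'v) lbl) \<Rightarrow> bool" where
  "execution Qs F x c lab \<longleftrightarrow> c 0 = init_cfg \<and>
     (\<forall>t. en Qs F (c t) (lab t) \<and> c (Suc t) = eff x (c t) (lab t))"

definition fair :: "('p \<Rightarrow> 'p set set) \<Rightarrow> 'p set \<Rightarrow> (nat \<Rightarrow> ('p, 'v) cfg)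
    \<Rightarrow> (nat \<Rightarrow> ('p, 'v) lbl) \<Rightarrow> bool" where
  "fair Qs F c lab \<longleftrightarrow>
     (\<forall>l i. owner l = Some i \<longrightarrow> i \<notin> F \<longrightarrow>
        (\<forall>t. (\<forall>t'\<ge>t. en Qs F (c t') l) \<longrightarrow> (\<exists>t'\<ge>t. lab t' = l)))"

definition reliable_links :: "'p set \<Rightarrow> (nat \<Rightarrow> ('p, 'v) cfg) \<Rightarrow> bool" where
  "reliable_links F c \<longleftrightarrow>
     (\<forall>t i j m. i \<notin> F \<longrightarrow> j \<notin> F \<longrightarrow> (i, j, m) \<in> sent (c t) \<longrightarrow>
        (\<exists>t'. (i, m) \<in> rcvd (loc (c t') j)))"

text \<open>Guarantees of asymmetric reliable broadcast w.r.t. the maximal guild G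
  (at most one delivery per sender is enforced by the step relation).\<close>
definition arb_spec :: "'p set \<Rightarrow> 'p set \<Rightarrow> (nat \<Rightarrow> ('p, 'v) cfg) \<Rightarrow> bool" where
  "arb_spec G F c \<longleftrightarrow>
     \<comment> \<open>validity\<close>
     (\<forall>t j m. j \<notin> F \<longrightarrow> arbBc (loc (c t) j) = Some m \<longrightarrow>
        (\<forall>k\<in>G. \<exists>t'. arbDel (loc (c t') k) j = Some m)) \<and>
     \<comment> \<open>consistency\<close>
     (\<forall>k\<in>G. \<forall>k'\<in>G. \<forall>j t t' m m'. arbDel (loc (c t) k) j = Some m \<longrightarrow>
        arbDel (loc (c t') k') j = Some m' \<longrightarrow> m = m') \<and>
     \<comment> \<open>totality\<close>
     (\<forall>k\<in>G. \<forall>j t m. arbDel (loc (c t) k) j = Some m \<longrightarrow>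
        (\<forall>k'\<in>G. \<exists>t' m'. arbDel (loc (c t') k') j = Some m')) \<and>
     \<comment> \<open>integrity for correct senders\<close>
     (\<forall>i j t m. i \<notin> F \<longrightarrow> j \<notin> F \<longrightarrow> arbDel (loc (c t) i) j = Some m \<longrightarrow>
        (\<exists>t'\<le>t. arbBc (loc (c t') j) = Some m))"

end

theory Submission
  imports Defs
begin

definition mrel :: "('p, 'v) cfg \<Rightarrow> ('p, 'v) cfg \<Rightarrow> bool" where
  "mrel c c' \<longleftrightarrow> sent c \<subseteq> sent c' \<and>
     (\<forall>i. rcvd (loc c i) \<subseteq> rcvd (loc c' i) \<and> handled (loc c i) \<subseteq> handled (loc c' i) \<and>
          fired (loc c i) \<subseteq> fired (loc c' i) \<and> Sset (loc c i) \<subseteq> Sset (loc c' i) \<and>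
          (sentT (loc c i) \<longrightarrow> sentT (loc c' i)) \<and>
          (\<forall>j m. arbDel (loc c i) j = Some m \<longrightarrow> arbDel (loc c' i) j = Some m))"

lemma mrel_refl: "mrel c c" by (auto simp: mrel_def)
lemma mrel_trans: "mrel a b \<Longrightarrow> mrel b c \<Longrightarrow> mrel a c"
  unfolding mrel_def by blast

lemma mrel_step: "en Qs F c l \<Longrightarrow> mrel c (eff x c l)"
  by (cases l) (auto simp: mrel_def setloc_def send_all_def Let_def)

definition invA :: "('p, 'v) cfg \<Rightarrow> bool" where
  "invA c \<longleftrightarrow> (\<forall>i. Sset (loc c i) = {m. arbDel (loc c i) (fst m) = Some m}) \<and>
     (\<forall>i. A3 \<in> fired (loc c i) \<longrightarrow> (\<exists>S. (\<forall>k. (i, k, DistS i S) \<in> sent c) \<and> S \<subseteq> Sset (loc c i))) \<and>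
     (\<forall>i. A5 \<in> fired (loc c i) \<longrightarrow> (\<forall>k. (i, k, Ready) \<in> sent c)) \<and>
     (\<forall>i. A6 \<in> fired (loc c i) \<longrightarrow> (\<forall>k. (i, k, Confirm) \<in> sent c)) \<and>
     (\<forall>i. A8 \<in> fired (loc c i) \<longrightarrow> (\<exists>T. \<forall>k. (i, k, DistT i T) \<in> sent c)) \<and>
     (\<forall>i k' j X. (k', DistS j X) \<in> handled (loc c i) \<longrightarrow> sentT (loc c i) \<or> (i, j, Ack i) \<in> sent c) \<and>
     (\<forall>i. sentT (loc c i) \<longrightarrow> (\<exists>T. \<forall>k. (i, k, DistT i T) \<in> sent c)) \<and>
     (\<forall>i. proposed (loc c i) \<longrightarrow> arbBc (loc c i) \<noteq> None) \<and>
     (\<forall>i m. arbBc (loc c i) = Some m \<longrightarrow> fst m = i)"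

lemma inv_init: "invA init_cfg"
  by (simp add: invA_def init_cfg_def init_lst_def)

lemma invD_S1: assumes "invA c" "(j, v) \<in> Sset (loc c i)" shows "arbDel (loc c i) j = Some (j, v)"
  using assms(2) unfolding assms(1)[unfolded invA_def, THEN conjunct1, rule_format, of i] by simp
lemma invD_S2: assumes "invA c" "arbDel (loc c i) j = Some m" "fst m = j" shows "m \<in> Sset (loc c i)"
  using assms(2,3) unfolding assms(1)[unfolded invA_def, THEN conjunct1, rule_format, of i] by auto
lemma invD_A3: assumes "invA c" "A3 \<in> fired (loc c i)"
  shows "\<exists>S. (\<forall>k. (i, k, DistS i S) \<in> sent c) \<and> S \<subseteq> Sset (loc c i)"
  using assms(1)[unfolded invA_def, THEN conjunct2, THEN conjunct1, rule_format, OF assms(2)] .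
lemma invD_A5: assumes "invA c" "A5 \<in> fired (loc c i)" shows "(i, k, Ready) \<in> sent c"
  using assms(1)[unfolded invA_def, THEN conjunct2, THEN conjunct2, THEN conjunct1, rule_format, OF assms(2)] .
lemma invD_A6: assumes "invA c" "A6 \<in> fired (loc c i)" shows "(i, k, Confirm) \<in> sent c"
  using assms(1)[unfolded invA_def, THEN conjunct2, THEN conjunct2, THEN conjunct2, THEN conjunct1, rule_format, OF assms(2)] .
lemma invD_A8: assumes "invA c" "A8 \<in> fired (loc c i)" shows "\<exists>T. \<forall>k. (i, k, DistT i T) \<in> sent c"
  using assms(1)[unfolded invA_def, THEN conjunct2, THEN conjunct2, THEN conjunct2, THEN conjunct2, THEN conjunct1, rule_format, OF assms(2)] .
lemma invD_H: assumes "invA c" "(k', DistS j X) \<in> handled (loc c i)" shows "sentT (loc c i) \<or> (i, j, Ack i) \<in> sent c"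
  using assms(1)[unfolded invA_def, THEN conjunct2, THEN conjunct2, THEN conjunct2, THEN conjunct2, THEN conjunct2, THEN conjunct1, rule_format, OF assms(2)] .
lemma invD_T: assumes "invA c" "sentT (loc c i)" shows "\<exists>T. \<forall>k. (i, k, DistT i T) \<in> sent c"
  using assms(1)[unfolded invA_def, THEN conjunct2, THEN conjunct2, THEN conjunct2, THEN conjunct2, THEN conjunct2, THEN conjunct2, THEN conjunct1, rule_format, OF assms(2)] .
lemma invD_P: assumes "invA c" "proposed (loc c i)" shows "arbBc (loc c i) \<noteq> None"
  using assms(1)[unfolded invA_def, THEN conjunct2, THEN conjunct2, THEN conjunct2, THEN conjunct2, THEN conjunct2, THEN conjunct2, THEN conjunct2, THEN conjunct1, rule_format, OF assms(2)] .
lemma invD_B: assumes "invA c" "arbBc (loc c i) = Some m" shows "fst m = i"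
  using assms(1)[unfolded invA_def, THEN conjunct2, THEN conjunct2, THEN conjunct2, THEN conjunct2, THEN conjunct2, THEN conjunct2, THEN conjunct2, THEN conjunct2, rule_format, OF assms(2)] .

lemma invA_mono: assumes a: "invA c" and l: "loc c' = loc c" and s: "sent c \<subseteq> sent c'" shows "invA c'"
  unfolding invA_def l
proof (intro conjI allI impI)
  fix i
  show "Sset (loc c i) = {m. arbDel (loc c i) (fst m) = Some m}"
    using a unfolding invA_def by blast
next
  fix i assume "A3 \<in> fired (loc c i)"
  then show "\<exists>S. (\<forall>k. (i, k, DistS i S) \<in> sent c') \<and> S \<subseteq> Sset (loc c i)"
    using invD_A3[OF a] s by blast
next
  fix i k assume "A5 \<in> fired (loc c i)"
  then show "(i, k, Ready) \<in> sent c'" using invD_A5[OF a] s by blast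
next
  fix i k assume "A6 \<in> fired (loc c i)"
  then show "(i, k, Confirm) \<in> sent c'" using invD_A6[OF a] s by blast
next
  fix i assume "A8 \<in> fired (loc c i)"
  then show "\<exists>T. \<forall>k. (i, k, DistT i T) \<in> sent c'" using invD_A8[OF a] s by blast
next
  fix i k' j X assume "(k', DistS j X) \<in> handled (loc c i)"
  then show "sentT (loc c i) \<or> (i, j, Ack i) \<in> sent c'" using invD_H[OF a] s by blast
next
  fix i assume "sentT (loc c i)"
  then show "\<exists>T. \<forall>k. (i, k, DistT i T) \<in> sent c'" using invD_T[OF a] s by blast
next
  fix i assume "proposed (loc c i)"
  then show "arbBc (loc c i) \<noteq> None" using invD_P[OF a] by blast
next
  fix i m assume "arbBc (loc c i) = Some m"
  then show "fst m = i" using invD_B[OF a] by blast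
qed


lemma inv_c0: "invA c \<Longrightarrow> en Qs F c (Propose i) \<Longrightarrow> invA (eff x c (Propose i))"
  by (auto simp: invA_def setloc_def send_all_def Let_def split: if_splits)

lemma inv_c1: "invA c \<Longrightarrow> en Qs F c (DoDistS i) \<Longrightarrow> invA (eff x c (DoDistS i))"
  by (auto simp: invA_def setloc_def send_all_def Let_def split: if_splits)

lemma inv_c2: "invA c \<Longrightarrow> en Qs F c (HandleS i k j X) \<Longrightarrow> invA (eff x c (HandleS i k j X))"
  apply (auto simp: invA_def setloc_def send_all_def Let_def split: if_splits)
  apply blast+
  done

lemma inv_c3: "invA c \<Longrightarrow> en Qs F c (SendReady i) \<Longrightarrow> invA (eff x c (SendReady i))"
  by (auto simp: invA_def setloc_def send_all_def Let_def split: if_splits)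

lemma inv_c4: "invA c \<Longrightarrow> en Qs F c (ConfirmQ i) \<Longrightarrow> invA (eff x c (ConfirmQ i))"
  by (auto simp: invA_def setloc_def send_all_def Let_def split: if_splits)

lemma inv_c5: "invA c \<Longrightarrow> en Qs F c (ConfirmK i) \<Longrightarrow> invA (eff x c (ConfirmK i))"
  by (auto simp: invA_def setloc_def send_all_def Let_def split: if_splits)

lemma inv_c6: "invA c \<Longrightarrow> en Qs F c (DoDistT i) \<Longrightarrow> invA (eff x c (DoDistT i))"
  by (auto simp: invA_def setloc_def send_all_def Let_def split: if_splits)

lemma inv_c7: "invA c \<Longrightarrow> en Qs F c (HandleT i j X) \<Longrightarrow> invA (eff x c (HandleT i j X))"
  by (auto simp: invA_def setloc_def send_all_def Let_def split: if_splits)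

lemma inv_c8: "invA c \<Longrightarrow> en Qs F c (Deliver i) \<Longrightarrow> invA (eff x c (Deliver i))"
  by (auto simp: invA_def setloc_def send_all_def Let_def split: if_splits)

lemma inv_c9: "invA c \<Longrightarrow> en Qs F c (ArbDeliver i j m) \<Longrightarrow> invA (eff x c (ArbDeliver i j m))"
  apply (auto simp: invA_def setloc_def send_all_def Let_def split: if_splits)
  apply (meson subset_insertI2)
  done

lemma inv_c10: "invA c \<Longrightarrow> en Qs F c (Recv i j m) \<Longrightarrow> invA (eff x c (Recv i j m))"
  by (auto simp: invA_def setloc_def send_all_def Let_def split: if_splits)

lemma inv_c11: "invA c \<Longrightarrow> en Qs F c (Byz i j m) \<Longrightarrow> invA (eff x c (Byz i j m))"
  by (rule invA_mono[of c]) auto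

lemma inv_c12: "invA c \<Longrightarrow> en Qs F c Stutter \<Longrightarrow> invA (eff x c Stutter)"
  by simp

lemma inv_step: assumes "invA c" "en Qs F c l" shows "invA (eff x c l)"
  using assms
  apply (cases l)
  apply (simp_all only:)
  apply (rule inv_c0 inv_c1 inv_c2 inv_c3 inv_c4 inv_c5 inv_c6 inv_c7 inv_c8 inv_c9 inv_c10 inv_c11 inv_c12; assumption)+
  done

lemma arbV: assumes "arb_spec G F c" "j \<notin> F" "arbBc (loc (c t) j) = Some m" "k \<in> G"
  shows "\<exists>t'. arbDel (loc (c t') k) j = Some m"
  using assms(1)[unfolded arb_spec_def, THEN conjunct1, rule_format, OF assms(2) assms(3) assms(4)] .

lemma arbC: assumes "arb_spec G F c" "k \<in> G" "k' \<in> G" "arbDel (loc (c t) k) j = Some m"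
    "arbDel (loc (c t') k') j = Some m'"
  shows "m = m'"
  using assms(1)[unfolded arb_spec_def, THEN conjunct2, THEN conjunct1, rule_format, OF assms(2) assms(3) assms(4) assms(5)] .

lemma arbT: assumes "arb_spec G F c" "k \<in> G" "arbDel (loc (c t) k) j = Some m" "k' \<in> G"
  shows "\<exists>t' m'. arbDel (loc (c t') k') j = Some m'"
  using assms(1)[unfolded arb_spec_def, THEN conjunct2, THEN conjunct2, THEN conjunct1, rule_format, OF assms(2) assms(3) assms(4)] .

lemma rlD: assumes "reliable_links F c" "i \<notin> F" "j \<notin> F" "(i, j, m) \<in> sent (c t)"
  shows "\<exists>t'. (i, m) \<in> rcvd (loc (c t') j)"
  using assms(1)[unfolded reliable_links_def, rule_format, OF assms(2) assms(3) assms(4)] .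

lemma fairD: assumes "fair Qs F c lab" "owner l = Some i" "i \<notin> F" "\<forall>t'\<ge>t. en Qs F (c t') l"
  shows "\<exists>t'\<ge>t. lab t' = l"
  using assms(4) by (intro assms(1)[unfolded fair_def, rule_format, OF assms(2) assms(3)]) auto

lemma exec_inv: "execution Qs F x c lab \<Longrightarrow> invA (c t)"
proof (induction t)
  case 0 then show ?case by (simp add: execution_def inv_init)
next
  case (Suc t) then show ?case unfolding execution_def by (metis inv_step)
qed

lemma exec_mrel: assumes "execution Qs F x c lab" "t \<le> t'" shows "mrel (c t) (c t')"
  using assms(2)
proof (induction t' rule: dec_induct)
  case base then show ?case by (rule mrel_refl)
next
  case (step n) then show ?case using assms(1) unfolding execution_def by (metis mrel_trans mrel_step)
qed

lemma ev_mrel: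
  assumes "execution Qs F x c lab" "R (c t0)" "\<And>a b. mrel a b \<Longrightarrow> R a \<Longrightarrow> R b"
  shows "eventually (\<lambda>t. R (c t)) sequentially"
  unfolding eventually_sequentially using assms exec_mrel by blast

lemma fire:
  assumes exec: "execution Qs F x c lab" and fr: "fair Qs F c lab"
    and own: "owner l = Some i" and iF: "i \<notin> F"
    and Pstep: "\<And>t. lab t = l \<Longrightarrow> P (c (Suc t))"
    and ev: "eventually (\<lambda>t. P (c t) \<or> en Qs F (c t) l) sequentially"
  shows "\<exists>t. P (c t)"
proof (rule ccontr)
  assume np: "\<not> (\<exists>t. P (c t))"
  from ev obtain N where N: "\<forall>n\<ge>N. P (c n) \<or> en Qs F (c n) l" unfolding eventually_sequentially by blast
  then have "\<forall>n\<ge>N. en Qs F (c n) l" using np by blast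
  with fr own iF obtain t' where "lab t' = l" unfolding fair_def by blast
  then show False using Pstep np by blast
qed

theorem lemma3p3:
  fixes Fs Qs :: "'p::finite \<Rightarrow> 'p set set"
    and F :: "'p set"
    and x :: "'p \<Rightarrow> 'v"
    and c :: "nat \<Rightarrow> ('p, 'v) cfg"
    and lab :: "nat \<Rightarrow> ('p, 'v) lbl"
  assumes "abqs Fs Qs"
    and "execution Qs F x c lab"
    and "fair Qs F c lab"
    and "reliable_links F c"
    and "arb_spec (Gmax Fs Qs F) F c"
    and "has_guild Fs Qs F"
  shows "\<exists>i\<in>Gmax Fs Qs F. \<exists>t j T. (i, j, DistT i T) \<in> sent (c t)"
proof (rule ccontr)
  assume nd: "\<not> (\<exists>i\<in>Gmax Fs Qs F. \<exists>t j T. (i, j, DistT i T) \<in> sent (c t))"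
  note exec = assms(2) and fr = assms(3) and rl = assms(4) and arb = assms(5)
  obtain G where Gne: "G \<noteq> {}" and gd: "guild Fs Qs F G" using assms(6) unfolding has_guild_def by blast
  have GG: "G \<subseteq> Gmax Fs Qs F" using gd unfolding Gmax_def by blast
  have GF: "\<And>i. i \<in> G \<Longrightarrow> i \<notin> F" using gd unfolding guild_def wise_def by blast
  have "\<forall>i\<in>G. \<exists>Q. Q \<in> Qs i \<and> Q \<subseteq> G" using gd unfolding guild_def by blast
  then obtain Qf where Qf: "\<And>i. i \<in> G \<Longrightarrow> Qf i \<in> Qs i \<and> Qf i \<subseteq> G" by metis
  have inv: "\<And>t. invA (c t)" using exec exec_inv by blast
  have step: "\<And>t. c (Suc t) = eff x (c t) (lab t)" using exec unfolding execution_def by blast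
  have noT: "\<And>i t. i \<in> G \<Longrightarrow> \<not> sentT (loc (c t) i)"
  proof
    fix i t assume "i \<in> G" "sentT (loc (c t) i)"
    then obtain T where "\<forall>k. (i, k, DistT i T) \<in> sent (c t)" using invD_T[OF inv[of t]] by blast
    then show False using nd GG \<open>i \<in> G\<close> by blast
  qed
  have S1: "\<exists>t m. arbBc (loc (c t) j) = Some m" if hyp: "j \<in> G" for j
  proof (rule ccontr)
    assume "\<not> (\<exists>t m. arbBc (loc (c t) j) = Some m)"
    then have na: "\<And>t. arbBc (loc (c t) j) = None" by fastforce
    then have "\<And>t. \<not> proposed (loc (c t) j)" using invD_P[OF inv] by blast
    then have "\<forall>t'\<ge>0. en Qs F (c t') (Propose j)" using GF[OF hyp] by simp
    then obtain t' where "lab t' = Propose j" using fairD[OF fr _ GF[OF hyp], of "Propose j" 0] by auto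
    then have "arbBc (loc (c (Suc t')) j) = Some (j, x j)" using step[of t'] by (simp add: setloc_def)
    then show False using na by simp
  qed
  have S2: "eventually (\<lambda>t. \<exists>v. (j, v) \<in> Sset (loc (c t) k)) sequentially" if hyp: "k \<in> G" "j \<in> G" for k j
  proof -
    obtain t m where m: "arbBc (loc (c t) j) = Some m" using S1 hyp by blast
    have fm: "fst m = j" using invD_B[OF inv[of t] m] .
    obtain t' where t': "arbDel (loc (c t') k) j = Some m"
      using arbV[OF arb GF[OF hyp(2)] m] GG hyp(1) by blast
    have "m \<in> Sset (loc (c t') k)" using invD_S2[OF inv[of t'] t' fm] .
    then have "\<exists>v. (j, v) \<in> Sset (loc (c t') k)" using fm by (metis prod.collapse)
    then show ?thesis by (rule ev_mrel[OF exec]) (metis mrel_def subsetD)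
  qed
  have S3: "\<exists>t S. (\<forall>k. (i, k, DistS i S) \<in> sent (c t)) \<and> S \<subseteq> Sset (loc (c t) i)" if hyp: "i \<in> G" for i
  proof -
    have "\<exists>t. A3 \<in> fired (loc (c t) i)"
    proof (rule fire[OF exec fr, of "DoDistS i" i])
      show "i \<notin> F" using GF hyp .
      show "A3 \<in> fired (loc (c (Suc t)) i)" if "lab t = DoDistS i" for t
        using step[of t] that by (simp add: setloc_def send_all_def)
      have "eventually (\<lambda>t. \<forall>j\<in>Qf i. \<exists>v. (j, v) \<in> Sset (loc (c t) i)) sequentially"
        by (rule eventually_ball_finite) (use S2 Qf hyp in auto)
      then show "eventually (\<lambda>t. A3 \<in> fired (loc (c t) i) \<or> en Qs F (c t) (DoDistS i)) sequentially"
      proof (rule eventually_mono)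
        fix t assume a: "\<forall>j\<in>Qf i. \<exists>v. (j, v) \<in> Sset (loc (c t) i)"
        have "\<exists>Q\<in>Qs i. \<forall>j\<in>Q. \<exists>v. (j, v) \<in> Sset (loc (c t) i)" using a Qf[OF hyp] by blast
        then show "A3 \<in> fired (loc (c t) i) \<or> en Qs F (c t) (DoDistS i)" using GF[OF hyp] by simp
      qed
    qed simp
    then show ?thesis using invD_A3[OF inv] by blast
  qed
  have subS: "eventually (\<lambda>t. X \<subseteq> Sset (loc (c t) k)) sequentially"
    if hyp: "i \<in> G" "k \<in> G" "X \<subseteq> Sset (loc (c t0) i)" for i k X t0
  proof -
    have ad: "arbDel (loc (c t0) i) j = Some (j, v)" if "(j, v) \<in> X" for j v
      using invD_S1[OF inv[of t0]] that \<open>X \<subseteq> _\<close> by blast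
    have "eventually (\<lambda>t. \<forall>j\<in>fst ` X. \<forall>v. (j, v) \<in> X \<longrightarrow> (j, v) \<in> Sset (loc (c t) k)) sequentially"
    proof (rule eventually_ball_finite)
      show "finite (fst ` X)" by simp
      show "\<forall>j\<in>fst ` X. eventually (\<lambda>t. \<forall>v. (j, v) \<in> X \<longrightarrow> (j, v) \<in> Sset (loc (c t) k)) sequentially"
      proof
        fix j assume "j \<in> fst ` X"
        then obtain v0 where v0: "(j, v0) \<in> X" by force
        have uni: "v = v0" if "(j, v) \<in> X" for v using ad[OF v0] ad[OF that] by simp
        obtain t' m' where t': "arbDel (loc (c t') k) j = Some m'"
          using arbT[OF arb _ ad[OF v0]] GG \<open>i \<in> G\<close> \<open>k \<in> G\<close> by blast
        have "m' = (j, v0)" using arbC[OF arb _ _ ad[OF v0] t'] GG \<open>i \<in> G\<close> \<open>k \<in> G\<close> by blast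
        then have "(j, v0) \<in> Sset (loc (c t') k)" using invD_S2[OF inv[of t'] t'] by simp
        then have "eventually (\<lambda>t. (j, v0) \<in> Sset (loc (c t) k)) sequentially"
          by (rule ev_mrel[OF exec]) (auto simp: mrel_def)
        then show "eventually (\<lambda>t. \<forall>v. (j, v) \<in> X \<longrightarrow> (j, v) \<in> Sset (loc (c t) k)) sequentially"
          by (rule eventually_mono) (use uni in blast)
      qed
    qed
    then show ?thesis by (rule eventually_mono) force
  qed
  have S4: "eventually (\<lambda>t. (k, Ack k) \<in> rcvd (loc (c t) i)) sequentially" if hyp: "i \<in> G" "k \<in> G" for i k
  proof -
    obtain t0 S where S: "\<forall>k. (i, k, DistS i S) \<in> sent (c t0)" "S \<subseteq> Sset (loc (c t0) i)"
      using S3 hyp by blast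
    obtain t1 where "(i, DistS i S) \<in> rcvd (loc (c t1) k)"
      using rlD[OF rl] S GF hyp by blast
    then have e1: "eventually (\<lambda>t. (i, DistS i S) \<in> rcvd (loc (c t) k)) sequentially"
      by (rule ev_mrel[OF exec]) (auto simp: mrel_def)
    have e2: "eventually (\<lambda>t. S \<subseteq> Sset (loc (c t) k)) sequentially"
      using subS hyp S(2) by blast
    have "\<exists>t. (i, DistS i S) \<in> handled (loc (c t) k)"
    proof (rule fire[OF exec fr, of "HandleS k i i S" k])
      show "k \<notin> F" using GF hyp by blast
      show "(i, DistS i S) \<in> handled (loc (c (Suc t)) k)" if "lab t = HandleS k i i S" for t
        using step[of t] that by (simp add: setloc_def Let_def)
      show "eventually (\<lambda>t. (i, DistS i S) \<in> handled (loc (c t) k) \<or> en Qs F (c t) (HandleS k i i S)) sequentially"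
        using eventually_conj[OF e1 e2] by (rule eventually_mono) (use GF hyp in auto)
    qed simp
    then obtain t2 where "(i, DistS i S) \<in> handled (loc (c t2) k)" by blast
    then have "(k, i, Ack k) \<in> sent (c t2)" using invD_H[OF inv[of t2]] noT[OF hyp(2)] by blast
    then obtain t3 where "(k, Ack k) \<in> rcvd (loc (c t3) i)"
      using rlD[OF rl] GF hyp by blast
    then show ?thesis by (rule ev_mrel[OF exec]) (auto simp: mrel_def)
  qed
  have S5: "eventually (\<lambda>t. (k, Ready) \<in> rcvd (loc (c t) i)) sequentially" if hyp: "i \<in> G" "k \<in> G" for i k
  proof -
    have "\<exists>t. A5 \<in> fired (loc (c t) k)"
    proof (rule fire[OF exec fr, of "SendReady k" k])
      show "k \<notin> F" using GF hyp by blast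
      show "A5 \<in> fired (loc (c (Suc t)) k)" if "lab t = SendReady k" for t
        using step[of t] that by (simp add: setloc_def send_all_def)
      have "eventually (\<lambda>t. \<forall>j\<in>Qf k. (j, Ack j) \<in> rcvd (loc (c t) k)) sequentially"
        by (rule eventually_ball_finite) (use S4 Qf hyp in auto)
      then show "eventually (\<lambda>t. A5 \<in> fired (loc (c t) k) \<or> en Qs F (c t) (SendReady k)) sequentially"
      proof (rule eventually_mono)
        fix t assume a: "\<forall>j\<in>Qf k. (j, Ack j) \<in> rcvd (loc (c t) k)"
        have "\<exists>Q\<in>Qs k. \<forall>j\<in>Q. \<exists>a. (j, Ack a) \<in> rcvd (loc (c t) k)" using a Qf[OF hyp(2)] by blast
        then show "A5 \<in> fired (loc (c t) k) \<or> en Qs F (c t) (SendReady k)" using GF[OF hyp(2)] by simp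
      qed
    qed simp
    then obtain t0 where "(k, i, Ready) \<in> sent (c t0)" using invD_A5[OF inv] by blast
    then obtain t3 where "(k, Ready) \<in> rcvd (loc (c t3) i)"
      using rlD[OF rl] GF hyp by blast
    then show ?thesis by (rule ev_mrel[OF exec]) (auto simp: mrel_def)
  qed
  have S6: "eventually (\<lambda>t. (k, Confirm) \<in> rcvd (loc (c t) i)) sequentially" if hyp: "i \<in> G" "k \<in> G" for i k
  proof -
    have "\<exists>t. A6 \<in> fired (loc (c t) k)"
    proof (rule fire[OF exec fr, of "ConfirmQ k" k])
      show "k \<notin> F" using GF hyp by blast
      show "A6 \<in> fired (loc (c (Suc t)) k)" if "lab t = ConfirmQ k" for t
        using step[of t] that by (simp add: setloc_def send_all_def)
      have "eventually (\<lambda>t. \<forall>j\<in>Qf k. (j, Ready) \<in> rcvd (loc (c t) k)) sequentially"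
        by (rule eventually_ball_finite) (use S5 Qf hyp in auto)
      then show "eventually (\<lambda>t. A6 \<in> fired (loc (c t) k) \<or> en Qs F (c t) (ConfirmQ k)) sequentially"
      proof (rule eventually_mono)
        fix t assume a: "\<forall>j\<in>Qf k. (j, Ready) \<in> rcvd (loc (c t) k)"
        have "\<exists>Q\<in>Qs k. \<forall>j\<in>Q. (j, Ready) \<in> rcvd (loc (c t) k)" using a Qf[OF hyp(2)] by blast
        then show "A6 \<in> fired (loc (c t) k) \<or> en Qs F (c t) (ConfirmQ k)" using GF[OF hyp(2)] by simp
      qed
    qed simp
    then obtain t0 where "(k, i, Confirm) \<in> sent (c t0)" using invD_A6[OF inv] by blast
    then obtain t3 where "(k, Confirm) \<in> rcvd (loc (c t3) i)"
      using rlD[OF rl] GF hyp by blast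
    then show ?thesis by (rule ev_mrel[OF exec]) (auto simp: mrel_def)
  qed
  obtain i where iG: "i \<in> G" using Gne by blast
  have "\<exists>t. \<exists>T. (i, i, DistT i T) \<in> sent (c t)"
  proof (rule fire[OF exec fr, of "DoDistT i" i])
    show "i \<notin> F" using GF iG by blast
    show "\<exists>T. (i, i, DistT i T) \<in> sent (c (Suc t))" if "lab t = DoDistT i" for t
      using step[of t] that by (simp add: setloc_def send_all_def) blast
    have "eventually (\<lambda>t. \<forall>j\<in>Qf i. (j, Confirm) \<in> rcvd (loc (c t) i)) sequentially"
      by (rule eventually_ball_finite) (use S6 Qf iG in auto)
    then show "eventually (\<lambda>t. (\<exists>T. (i, i, DistT i T) \<in> sent (c t)) \<or> en Qs F (c t) (DoDistT i)) sequentially"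
    proof (rule eventually_mono)
      fix t assume a: "\<forall>j\<in>Qf i. (j, Confirm) \<in> rcvd (loc (c t) i)"
      show "(\<exists>T. (i, i, DistT i T) \<in> sent (c t)) \<or> en Qs F (c t) (DoDistT i)"
      proof (cases "A8 \<in> fired (loc (c t) i)")
        case True then show ?thesis using invD_A8[OF inv[of t]] by blast
      next
        case False
        have "\<exists>Q\<in>Qs i. \<forall>j\<in>Q. (j, Confirm) \<in> rcvd (loc (c t) i)" using a Qf[OF iG] by blast
        then show ?thesis using False GF[OF iG] by simp
      qed
    qed
  qed simp
  then show False using nd GG iG by blast
qed

end
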